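(* Fix $\omega_c>0$. For each integer $D\ge 1$ define the polynomial in $z^{-1}$ $$\psi_D(z):=\sum_{i=0}^{D-1}\frac{2\omega_c}{D\pi}\,\mathrm{sinc}\!\left(\frac{2\omega_c}{D\pi}\Big(i-\frac{D-1}{2}\Big)\right)z^{-i},$$ where $\mathrm{sinc}(x)=\sin(\pi x)/(\pi x)$ for $x\neq 0$ and $\mathrm{sinc}(0)=1$. Then for every fixed $\omega\in\mathbb{R}$, $$\lim_{D\to\infty}\left|\psi_D\!\left(e^{-2\mathrm{i}\omega/D}\right)\right|=\frac{\left|\mathrm{Si}(\omega+\omega_c)-\mathrm{Si}(\omega-\omega_c)\right|}{\pi}=:|\Psi(\omega)|,$$ where $\mathrm{Si}(s)=\int_0^s\frac{\sin\theta}{\theta}\,d\theta$ is the sine integral. Moreover $|\Psi(\omega)|\to 0$ as $\omega\to\pm\infty$, and consequently, for any fixed $\delta\in(0,1)$, the quantity $\frac{\delta^2|\Psi(\omega)|^2}{1-\delta^2|\Psi(\omega)|^2}$ tends to $0$ as $\omega\to\pm\infty$.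
   Context: Here $e^{-2\mathrm{i}\omega/D}$ is the point $z(\omega)=e^{-2\mathrm{i}\omega\epsilon}$ with $\epsilon=1/D$, which lies on the unit circle for real $\omega$. *)

theory Defs
  imports "HOL-Probability.Sinc_Integral"
begin

definition nsinc :: "real \<Rightarrow> real" where
  "nsinc x = (if x = 0 then 1 else sin (pi * x) / (pi * x))"

definition psiD :: "real \<Rightarrow> nat \<Rightarrow> complex \<Rightarrow> complex" where
  "psiD wc D z = (\<Sum>i<D. complex_of_real
      ((2 * wc / (real D * pi)) * nsinc ((2 * wc / (real D * pi)) * (real i - (real D - 1) / 2)))
      * (inverse z) ^ i)"

definition absPsi :: "real \<Rightarrow> real \<Rightarrow> real" where
  "absPsi wc w = \<bar>Si (w + wc) - Si (w - wc)\<bar> / pi"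

end

theory Submission
  imports Defs
begin

lemma riemann_mid:
  fixes H h :: "real \<Rightarrow> real"
  assumes der: "\<And>x. (H has_real_derivative h x) (at x)"
    and cont: "continuous_on {-1..1} h"
  shows "(\<lambda>D. \<Sum>i<D. (2 / real D) * h (-1 + (2 * real i + 1) / real D)) \<longlonglongrightarrow> H 1 - H (-1)"
proof (rule LIMSEQ_I)
  fix r :: real assume r: "r > 0"
  have uc: "uniformly_continuous_on {-1..1} h"
    using compact_uniformly_continuous[OF cont] by simp
  then obtain d where d: "d > 0" and dd: "\<And>x x'. x \<in> {-1..1} \<Longrightarrow> x' \<in> {-1..1} \<Longrightarrow> dist x' x < d \<Longrightarrow> dist (h x') (h x) < r / 4"
    unfolding uniformly_continuous_on_def using r by (metis divide_pos_pos zero_less_numeral)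
  obtain N :: nat where N: "real N > 2 / d" using reals_Archimedean2 by blast
  show "\<exists>no. \<forall>n\<ge>no. norm ((\<Sum>i<n. (2 / real n) * h (-1 + (2 * real i + 1) / real n)) - (H 1 - H (-1))) < r"
  proof (intro exI allI impI)
    fix D assume DN: "D \<ge> Suc N"
    have Dpos: "real D > 0" using DN by simp
    have Dd: "2 / real D < d"
    proof -
      have "2 / d < real D" using N DN by simp
      then show ?thesis using d Dpos by (simp add: field_simps)
    qed
    define a where "a i = -1 + 2 * real i / real D" for i :: nat
    have tel: "H 1 - H (-1) = (\<Sum>i<D. H (a (Suc i)) - H (a i))"
      using sum_lessThan_telescope[of "\<lambda>i. H (a i)" D] Dpos by (simp add: a_def)
    have "\<forall>i<D. \<exists>z. a i < z \<and> z < a (Suc i) \<and> H (a (Suc i)) - H (a i) = (a (Suc i) - a i) * h z"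
    proof (intro allI impI)
      fix i assume "i < D"
      have "a i < a (Suc i)" using Dpos by (simp add: a_def field_simps)
      then show "\<exists>z. a i < z \<and> z < a (Suc i) \<and> H (a (Suc i)) - H (a i) = (a (Suc i) - a i) * h z"
        using MVT2[of "a i" "a (Suc i)" H h] der by blast
    qed
    then obtain z where z: "\<And>i. i < D \<Longrightarrow> a i < z i \<and> z i < a (Suc i) \<and> H (a (Suc i)) - H (a i) = (a (Suc i) - a i) * h (z i)"
      by metis
    have step: "\<bar>(2 / real D) * h (-1 + (2 * real i + 1) / real D) - (H (a (Suc i)) - H (a i))\<bar> \<le> (2 / real D) * (r / 4)"
      if i: "i < D" for i
    proof -
      let ?s = "-1 + (2 * real i + 1) / real D"
      have dif: "a (Suc i) - a i = 2 / real D" using Dpos by (simp add: a_def field_simps)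
      have ai: "a i \<ge> -1" using Dpos by (simp add: a_def)
      have ai1: "a (Suc i) \<le> 1" using Dpos i by (simp add: a_def field_simps)
      have s1: "?s \<in> {-1..1}" using Dpos i by (auto simp: field_simps)
      have z1: "z i \<in> {-1..1}" using z[OF i] ai ai1 by auto
      have sa: "?s = a i + 1 / real D" using Dpos by (simp add: a_def field_simps)
      have "a i < z i" "z i < a i + 2 / real D" using z[OF i] dif by auto
      then have "\<bar>?s - z i\<bar> < 2 / real D" unfolding sa using Dpos by (simp add: abs_less_iff)
      then have "dist (h (z i)) (h ?s) < r / 4" using dd[OF s1 z1] Dd by (simp add: dist_real_def)
      then have bd: "\<bar>h ?s - h (z i)\<bar> \<le> r / 4" by (simp add: dist_real_def abs_minus_commute)
      have e: "(2 / real D) * h ?s - (H (a (Suc i)) - H (a i)) = (2 / real D) * (h ?s - h (z i))"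
        using z[OF i] dif by (simp add: algebra_simps)
      have "\<bar>2 / real D\<bar> = 2 / real D" using Dpos by simp
      then show ?thesis unfolding e abs_mult using mult_left_mono[OF bd, of "2 / real D"] Dpos by simp
    qed
    have "\<bar>(\<Sum>i<D. (2 / real D) * h (-1 + (2 * real i + 1) / real D)) - (H 1 - H (-1))\<bar>
        = \<bar>\<Sum>i<D. (2 / real D) * h (-1 + (2 * real i + 1) / real D) - (H (a (Suc i)) - H (a i))\<bar>"
      by (simp add: tel sum_subtractf)
    also have "\<dots> \<le> (\<Sum>i<D. \<bar>(2 / real D) * h (-1 + (2 * real i + 1) / real D) - (H (a (Suc i)) - H (a i))\<bar>)"
      by (rule sum_abs)
    also have "\<dots> \<le> (\<Sum>i<D. (2 / real D) * (r / 4))"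
      by (rule sum_mono) (use step in auto)
    also have "\<dots> = r / 2" using Dpos by simp
    finally show "norm ((\<Sum>i<D. (2 / real D) * h (-1 + (2 * real i + 1) / real D)) - (H 1 - H (-1))) < r"
      using r by simp
  qed
qed

lemma Si_odd: "Si (- x) = - Si x"
proof (cases "x \<ge> 0")
  case True then show ?thesis by (rule Si_neg)
next
  case False then have "Si (- (- x)) = - Si (- x)" by (intro Si_neg) simp
  then show ?thesis by simp
qed

lemma sinc_scale: "s \<noteq> 0 \<Longrightarrow> k * sinc (k * s) = sin (k * s) / s"
  by auto

lemma DERIV_Si_scale: "((\<lambda>s. Si (k * s)) has_real_derivative (k * sinc (k * s))) (at s)"
proof -
  have "((\<lambda>s. Si (k * s)) has_real_derivative (sinc (k * s) * k)) (at s)"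
    by (rule DERIV_chain2[OF DERIV_Si]) (auto intro!: derivative_eq_intros)
  then show ?thesis by (simp add: mult.commute)
qed

lemma key_h:
  fixes wc w t :: real and D :: nat
  assumes wc: "wc > 0" and D: "real D > 0"
  shows "(2 * wc / (real D * pi)) * nsinc ((2 * wc / (real D * pi)) * t) * cos (w * (2 * t / real D))
     = (2 / real D) * (((wc + w) * sinc ((wc + w) * (2 * t / real D)) + (wc - w) * sinc ((wc - w) * (2 * t / real D))) / (2 * pi))"
proof (cases "t = 0")
  case True then show ?thesis by (simp add: nsinc_def)
next
  case False
  define s where "s = 2 * t / real D"
  have s0: "s \<noteq> 0" using False D by (simp add: s_def)
  have a0: "(2 * wc / (real D * pi)) * t \<noteq> 0" using False D wc by simp
  have pa: "pi * ((2 * wc / (real D * pi)) * t) = wc * s" using D by (simp add: s_def field_simps)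
  have trig: "2 * sin (wc * s) * cos (w * s) = sin ((wc + w) * s) + sin ((wc - w) * s)"
    by (simp add: distrib_right left_diff_distrib sin_add sin_diff)
  have "(2 * wc / (real D * pi)) * nsinc ((2 * wc / (real D * pi)) * t) * cos (w * s)
      = (2 * wc / (real D * pi)) * (sin (wc * s) / (wc * s)) * cos (w * s)"
    using a0 pa by (simp add: nsinc_def)
  also have "\<dots> = (2 / real D) * ((2 * sin (wc * s) * cos (w * s)) / s / (2 * pi))"
    using wc D s0 by (simp add: field_simps)
  also have "\<dots> = (2 / real D) * ((sin ((wc + w) * s) / s + sin ((wc - w) * s) / s) / (2 * pi))"
    unfolding trig by (simp add: add_divide_distrib)
  also have "\<dots> = (2 / real D) * (((wc + w) * sinc ((wc + w) * s) + (wc - w) * sinc ((wc - w) * s)) / (2 * pi))"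
    using sinc_scale[OF s0, of "wc + w"] sinc_scale[OF s0, of "wc - w"] by simp
  finally show ?thesis by (simp add: s_def)
qed

lemma psi_rewrite:
  fixes wc w :: real and D :: nat
  assumes wc: "wc > 0" and D: "D > 0"
  shows "cmod (psiD wc D (exp (- 2 * \<i> * complex_of_real w / of_nat D)))
    = \<bar>\<Sum>i<D. (2 / real D) * (((wc + w) * sinc ((wc + w) * (-1 + (2 * real i + 1) / real D)) + (wc - w) * sinc ((wc - w) * (-1 + (2 * real i + 1) / real D))) / (2 * pi))\<bar>"
proof -
  define a where "a = 2 * wc / (real D * pi)"
  define t where "t i = real i - (real D - 1) / 2" for i :: nat
  define c where "c i = a * nsinc (a * t i)" for i
  define al where "al i = w * (2 * t i / real D)" for i
  define ph where "ph = w * (real D - 1) / real D"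
  have Dr: "real D > 0" using D by simp
  have pw: "(inverse (exp (- 2 * \<i> * complex_of_real w / of_nat D))) ^ i = exp (\<i> * of_real ph) * cis (al i)" for i
  proof -
    have "(inverse (exp (- 2 * \<i> * complex_of_real w / of_nat D))) ^ i = exp (of_nat i * (2 * \<i> * complex_of_real w / of_nat D))"
      by (simp add: exp_minus[symmetric] exp_of_nat_mult[symmetric] times_divide_eq_right)
    also have "of_nat i * (2 * \<i> * complex_of_real w / of_nat D) = \<i> * of_real ph + \<i> * of_real (al i)"
      using Dr by (simp add: ph_def al_def t_def field_simps)
    finally show ?thesis by (simp add: exp_add cis_conv_exp)
  qed
  have psi: "psiD wc D (exp (- 2 * \<i> * complex_of_real w / of_nat D)) = exp (\<i> * of_real ph) * (\<Sum>i<D. of_real (c i) * cis (al i))"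
    unfolding psiD_def pw by (simp add: sum_distrib_left c_def a_def t_def algebra_simps)
  have tref: "t (D - Suc i) = - t i" if "i < D" for i
    using that by (simp add: t_def of_nat_diff field_simps)
  have nsinc_even: "nsinc (- x) = nsinc x" for x by (simp add: nsinc_def)
  have im0: "(\<Sum>i<D. c i * sin (al i)) = 0"
  proof -
    have "(\<Sum>i<D. c i * sin (al i)) = (\<Sum>i<D. c (D - Suc i) * sin (al (D - Suc i)))"
      by (rule sum.nat_diff_reindex[symmetric])
    also have "\<dots> = (\<Sum>i<D. - (c i * sin (al i)))"
      by (rule sum.cong) (auto simp: tref c_def al_def nsinc_even)
    finally show ?thesis by (simp add: sum_negf)
  qed
  have sum_eq: "(\<Sum>i<D. of_real (c i) * cis (al i)) = complex_of_real (\<Sum>i<D. c i * cos (al i))"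
    by (rule complex_eqI) (simp_all add: Re_sum Im_sum im0)
  have re: "c i * cos (al i) = (2 / real D) * (((wc + w) * sinc ((wc + w) * (-1 + (2 * real i + 1) / real D)) + (wc - w) * sinc ((wc - w) * (-1 + (2 * real i + 1) / real D))) / (2 * pi))" for i
  proof -
    have "2 * t i / real D = -1 + (2 * real i + 1) / real D" using Dr by (simp add: t_def field_simps)
    then show ?thesis using key_h[OF wc Dr, of "t i" w] by (simp add: c_def al_def a_def)
  qed
  have se: "(\<Sum>i<D. c i * cos (al i)) = (\<Sum>i<D. (2 / real D) * (((wc + w) * sinc ((wc + w) * (-1 + (2 * real i + 1) / real D)) + (wc - w) * sinc ((wc - w) * (-1 + (2 * real i + 1) / real D))) / (2 * pi)))"
    by (rule sum.cong[OF refl re])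
  show ?thesis unfolding psi sum_eq norm_mult norm_exp_i_times norm_of_real se by simp
qed

lemma part1:
  fixes wc w :: real
  assumes wc: "wc > 0"
  shows "(\<lambda>D::nat. cmod (psiD wc D (exp (- 2 * \<i> * complex_of_real w / of_nat D)))) \<longlonglongrightarrow> absPsi wc w"
proof -
  define h where "h s = ((wc + w) * sinc ((wc + w) * s) + (wc - w) * sinc ((wc - w) * s)) / (2 * pi)" for s
  define H where "H s = (Si ((wc + w) * s) + Si ((wc - w) * s)) / (2 * pi)" for s
  have der: "(H has_real_derivative h x) (at x)" for x
    unfolding H_def h_def
    by (intro DERIV_cdivide DERIV_add DERIV_Si_scale)
  have cont: "continuous_on {-1..1} h"
    unfolding h_def by (intro continuous_intros continuous_on_sinc) auto
  have lim: "(\<lambda>D. \<Sum>i<D. (2 / real D) * h (-1 + (2 * real i + 1) / real D)) \<longlonglongrightarrow> H 1 - H (-1)"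
    by (rule riemann_mid[OF der cont])
  have HH: "\<bar>H 1 - H (-1)\<bar> = absPsi wc w"
  proof -
    have "H 1 - H (-1) = (Si (w + wc) - Si (w - wc)) / pi"
      using Si_odd[of "wc + w"] Si_odd[of "wc - w"] Si_odd[of "w - wc"]
      by (simp add: H_def field_simps add.commute)
    then show ?thesis by (simp add: absPsi_def)
  qed
  have "(\<lambda>D. \<bar>\<Sum>i<D. (2 / real D) * h (-1 + (2 * real i + 1) / real D)\<bar>) \<longlonglongrightarrow> absPsi wc w"
    using tendsto_rabs[OF lim] HH by simp
  moreover have "\<forall>\<^sub>F D in sequentially. \<bar>\<Sum>i<D. (2 / real D) * h (-1 + (2 * real i + 1) / real D)\<bar>
      = cmod (psiD wc D (exp (- 2 * \<i> * complex_of_real w / of_nat D)))"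
    using eventually_gt_at_top[of 0] by eventually_elim (subst psi_rewrite[OF wc], simp, simp only: h_def)
  ultimately show ?thesis by (rule Lim_transform_eventually)
qed

lemma absPsi_even: "absPsi wc (- x) = absPsi wc x"
  unfolding absPsi_def using Si_odd[of "x - wc"] Si_odd[of "x + wc"]
  by (simp add: abs_minus_commute)

lemma absPsi_top: "(absPsi wc \<longlongrightarrow> 0) at_top"
proof -
  have f1: "filterlim (\<lambda>x. x + c) at_top at_top" for c :: real
    using filterlim_tendsto_add_at_top[OF tendsto_const filterlim_ident, of c] by (simp add: add.commute)
  have "((\<lambda>x. Si (x + wc)) \<longlongrightarrow> pi / 2) at_top"
    by (rule filterlim_compose[OF Si_at_top f1])
  moreover have "((\<lambda>x. Si (x - wc)) \<longlongrightarrow> pi / 2) at_top"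
    using filterlim_compose[OF Si_at_top f1[of "- wc"]] by simp
  ultimately have "((\<lambda>x. \<bar>Si (x + wc) - Si (x - wc)\<bar> / pi) \<longlongrightarrow> \<bar>pi/2 - pi/2\<bar> / pi) at_top"
    by (intro tendsto_intros) auto
  then show ?thesis unfolding absPsi_def[abs_def] by simp
qed

lemma absPsi_bot: "(absPsi wc \<longlongrightarrow> 0) at_bot"
  unfolding filterlim_at_bot_mirror absPsi_even using absPsi_top by simp

lemma ratio_lim:
  fixes F :: "real filter" and f :: "real \<Rightarrow> real" and \<delta> :: real
  assumes "(f \<longlongrightarrow> 0) F"
  shows "((\<lambda>w. \<delta>\<^sup>2 * (f w)\<^sup>2 / (1 - \<delta>\<^sup>2 * (f w)\<^sup>2)) \<longlongrightarrow> 0) F"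
proof -
  have "((\<lambda>w. \<delta>\<^sup>2 * (f w)\<^sup>2 / (1 - \<delta>\<^sup>2 * (f w)\<^sup>2)) \<longlongrightarrow> \<delta>\<^sup>2 * 0\<^sup>2 / (1 - \<delta>\<^sup>2 * 0\<^sup>2)) F"
    by (intro tendsto_divide tendsto_diff tendsto_mult tendsto_const tendsto_power assms) simp
  then show ?thesis by simp
qed

theorem mainTheorem2:
  fixes wc :: real
  assumes "wc > 0"
  shows "(\<forall>w::real. (\<lambda>D::nat. cmod (psiD wc D (exp (- 2 * \<i> * complex_of_real w / of_nat D))))
            \<longlonglongrightarrow> absPsi wc w)
    \<and> (absPsi wc \<longlongrightarrow> 0) at_top \<and> (absPsi wc \<longlongrightarrow> 0) at_bot
    \<and> (\<forall>\<delta>::real. 0 < \<delta> \<and> \<delta> < 1 \<longrightarrow>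
         ((\<lambda>w. \<delta>\<^sup>2 * (absPsi wc w)\<^sup>2 / (1 - \<delta>\<^sup>2 * (absPsi wc w)\<^sup>2)) \<longlongrightarrow> 0) at_top \<and>
         ((\<lambda>w. \<delta>\<^sup>2 * (absPsi wc w)\<^sup>2 / (1 - \<delta>\<^sup>2 * (absPsi wc w)\<^sup>2)) \<longlongrightarrow> 0) at_bot)"
  using part1[OF assms] absPsi_top absPsi_bot ratio_lim[OF absPsi_top] ratio_lim[OF absPsi_bot] by blast

end
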